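(* Let $N,\mu,\beta,\sigma,\gamma,p>0$ and $0<\rho<1$ and consider the system $$S'=\mu N-\tfrac{\beta(1-\rho)}{N}SI-\tfrac{p}{N}S-\mu S,\qquad E'=\tfrac{\beta(1-\rho)}{N}SI-(\sigma+\mu)E,\qquad I'=\sigma E-(\gamma+\mu)I$$ on $\Omega=\{(S,E,I)\in\mathbb{R}_+^3: S+E+I\le N\}$. Let $\mathcal{R}_0=\dfrac{\mu N\sigma\beta(1-\rho)}{(\sigma+\mu)(\gamma+\mu)(p+\mu N)}$. If $\mathcal{R}_0>1$, then the endemic equilibrium $(S^e,E^e,I^e)$, with $$S^e=\frac{(\sigma+\mu)(\gamma+\mu)N}{\sigma\beta(1-\rho)},\quad I^e=\frac{\mu N\sigma\beta(1-\rho)-(\sigma+\mu)(\gamma+\mu)(p+\mu N)}{(\sigma+\mu)(\gamma+\mu)\beta(1-\rho)},\quad E^e=\frac{\gamma+\mu}{\sigma}I^e,$$ is globally asymptotically stable in the interior of $\Omega$.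
   Context: Global asymptotic stability in the interior of $\Omega$: the equilibrium is stable and every solution starting in the interior of $\Omega$ converges to it as $t\to+\infty$. *)

theory Defs
  imports "HOL-Analysis.Analysis"
begin

definition Omega :: "real \<Rightarrow> (real \<times> real \<times> real) set" where
  "Omega N = {(s, e, i). 0 \<le> s \<and> 0 \<le> e \<and> 0 \<le> i \<and> s + e + i \<le> N}"

definition seir_field ::
  "real \<Rightarrow> real \<Rightarrow> real \<Rightarrow> real \<Rightarrow> real \<Rightarrow> real \<Rightarrow> real \<Rightarrow>
   real \<times> real \<times> real \<Rightarrow> real \<times> real \<times> real" where
  "seir_field N \<mu> \<beta> \<sigma> \<gamma> p \<rho> x =
     (case x of (s, e, i) \<Rightarrow>
       (\<mu> * N - \<beta> * (1 - \<rho>) / N * s * i - p / N * s - \<mu> * s,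
        \<beta> * (1 - \<rho>) / N * s * i - (\<sigma> + \<mu>) * e,
        \<sigma> * e - (\<gamma> + \<mu>) * i))"

definition is_forward_solution ::
  "('a::real_normed_vector \<Rightarrow> 'a) \<Rightarrow> (real \<Rightarrow> 'a) \<Rightarrow> bool" where
  "is_forward_solution f x \<longleftrightarrow>
     (\<forall>t\<ge>0. (x has_vector_derivative f (x t)) (at t within {0..}))"

definition globally_asymptotically_stable_in ::
  "('a::real_normed_vector \<Rightarrow> 'a) \<Rightarrow> 'a set \<Rightarrow> 'a \<Rightarrow> bool" where
  "globally_asymptotically_stable_in f D xe \<longleftrightarrow>
     (\<forall>\<epsilon>>0. \<exists>\<delta>>0. \<forall>x. is_forward_solution f x \<and> x 0 \<in> D \<and> dist (x 0) xe < \<delta>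
            \<longrightarrow> (\<forall>t\<ge>0. dist (x t) xe < \<epsilon>)) \<and>
     (\<forall>x. is_forward_solution f x \<and> x 0 \<in> D \<longrightarrow> (x \<longlongrightarrow> xe) at_top)"

end

theory Submission
  imports Defs
begin

definition G :: "real \<Rightarrow> real \<Rightarrow> real" where
  "G a u = u - a - a * ln (u / a)"

lemma G_nonneg: assumes "a > 0" "u > 0" shows "0 \<le> G a u"
proof -
  have "ln (u/a) \<le> u/a - 1" using assms by (intro ln_le_minus_one) simp
  then have "a * ln (u/a) \<le> a * (u/a - 1)" using assms by (intro mult_left_mono) auto
  also have "\<dots> = u - a" using assms by (simp add: field_simps)
  finally show ?thesis by (simp add: G_def)
qed

lemma G_sqrt: assumes "a > 0" "u > 0" shows "(sqrt u - sqrt a)^2 \<le> G a u"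
proof -
  have q: "sqrt (u/a) > 0" using assms by simp
  have "ln (u/a) = 2 * ln (sqrt (u/a))" using assms
    by (simp add: ln_sqrt)
  also have "\<dots> \<le> 2 * (sqrt (u/a) - 1)" using ln_le_minus_one[OF q] by simp
  finally have "a * ln (u/a) \<le> a * (2 * (sqrt (u/a) - 1))" using assms by (intro mult_left_mono) auto
  also have "\<dots> = 2 * sqrt a * sqrt u - 2 * a" using assms
    by (simp add: real_sqrt_divide field_simps)
  finally have h: "a * ln (u/a) \<le> 2 * sqrt a * sqrt u - 2 * a" .
  have "(sqrt u - sqrt a)^2 = u - 2 * sqrt a * sqrt u + a" using assms
    by (simp add: power2_eq_square algebra_simps)
  then show ?thesis using h by (simp add: G_def)
qed

lemma G_low: assumes "a > 0" "u > 0" "G a u \<le> C" shows "u \<ge> a * exp (-(C+a)/a)"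
proof -
  have "- a * ln (u/a) \<le> C + a" using assms by (simp add: G_def)
  then have "-(C+a)/a \<le> ln (u/a)" using assms by (simp add: field_simps)
  then have "exp (-(C+a)/a) \<le> u/a" using assms by (metis divide_pos_pos exp_le_cancel_iff exp_ln)
  then show ?thesis using assms by (simp add: field_simps)
qed

lemma G_up: assumes "a > 0" "u > 0" "G a u \<le> C" shows "u \<le> (sqrt a + sqrt C)^2"
proof -
  have C: "C \<ge> 0" using G_nonneg[OF assms(1,2)] assms(3) by simp
  have "(sqrt u - sqrt a)^2 \<le> C" using G_sqrt[OF assms(1,2)] assms(3) by simp
  then have "sqrt u - sqrt a \<le> sqrt C"
    by (metis C real_le_rsqrt real_sqrt_abs abs_ge_self order_trans real_sqrt_le_mono)
  then have "sqrt u \<le> sqrt a + sqrt C" by simp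
  then have "(sqrt u)^2 \<le> (sqrt a + sqrt C)^2" using assms by (intro power_mono) auto
  moreover have "(sqrt u)^2 = u" using assms by simp
  ultimately show ?thesis by simp
qed

lemma G_sep: assumes "a > 0" "u > 0" "h > 0" "\<bar>u - a\<bar> \<ge> h"
  shows "G a u \<ge> (sqrt (a+h) - sqrt a)^2"
proof -
  have "(sqrt (a+h) - sqrt a)^2 \<le> (sqrt u - sqrt a)^2"
  proof (cases "u \<ge> a + h")
    case True
    then have "sqrt (a+h) \<le> sqrt u" by simp
    moreover have "sqrt a \<le> sqrt (a+h)" using assms by simp
    ultimately show ?thesis by (intro power_mono) auto
  next
    case False
    then have u: "u \<le> a - h" using assms by auto
    then have ha: "h < a" using assms by auto
    have s1: "sqrt u \<le> sqrt (a - h)" using u by simp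
    define p where "p = sqrt (a+h)"
    define q where "q = sqrt (a-h)"
    have p2: "p^2 = a + h" unfolding p_def using assms by simp
    have q2: "q^2 = a - h" unfolding q_def using ha by simp
    have a2: "(sqrt a)^2 = a" using assms by simp
    have "(p+q)^2 \<le> (2 * sqrt a)^2"
    proof -
      have e: "(p+q)^2 = 2 * (p^2 + q^2) - (p-q)^2" by (simp add: power2_diff power2_sum)
      have "(p+q)^2 \<le> 2 * (p^2 + q^2)" unfolding e by simp
      also have "\<dots> = 4 * a" using p2 q2 by simp
      also have "\<dots> = (2 * sqrt a)^2" using a2 by (simp add: power_mult_distrib)
      finally show ?thesis .
    qed
    moreover have "0 \<le> 2 * sqrt a" using assms by simp
    ultimately have "p + q \<le> 2 * sqrt a" by (rule power2_le_imp_le)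
    then have "sqrt (a+h) + sqrt (a-h) \<le> 2 * sqrt a" unfolding p_def q_def .
    moreover have "sqrt a \<le> sqrt (a+h)" using assms by simp
    ultimately have "0 \<le> sqrt (a+h) - sqrt a" "sqrt (a+h) - sqrt a \<le> sqrt a - sqrt u"
      using s1 by linarith+
    then have "(sqrt (a+h) - sqrt a)^2 \<le> (sqrt a - sqrt u)^2" by (intro power_mono) auto
    then show ?thesis by (simp add: power2_commute)
  qed
  then show ?thesis using G_sqrt[OF assms(1,2)] by simp
qed

lemma G_deriv: assumes "a > 0" "u > 0"
  shows "(G a has_real_derivative (1 - a/u)) (at u within X)"
  unfolding G_def[abs_def] using assms
  by (auto intro!: derivative_eq_intros simp: field_simps)


lemma deriv_fst: "(x has_vector_derivative v) F \<Longrightarrow> ((\<lambda>t. fst (x t)) has_real_derivative fst v) F"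
  unfolding has_real_derivative_iff_has_vector_derivative has_vector_derivative_def
  by (drule has_derivative_fst) simp

lemma deriv_snd: "(x has_vector_derivative v) F \<Longrightarrow> ((\<lambda>t. snd (x t)) has_vector_derivative snd v) F"
  unfolding has_vector_derivative_def
  by (drule has_derivative_snd) simp

lemma cont0:
  assumes "\<And>t. 0 \<le> t \<Longrightarrow> (g has_real_derivative g' t) (at t within {0..})"
  shows "continuous_on {0..} g"
  by (rule DERIV_continuous_on) (use assms in auto)

lemma mvt0:
  fixes g :: "real \<Rightarrow> real"
  assumes "0 \<le> a" "a < b"
    and d: "\<And>s. a \<le> s \<Longrightarrow> s \<le> b \<Longrightarrow> (g has_real_derivative g' s) (at s within {0..})"
  shows "\<exists>z. a < z \<and> z < b \<and> g b - g a = (b - a) * g' z"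
proof -
  have c: "continuous_on {a..b} g"
  proof (rule DERIV_continuous_on)
    fix s assume "s \<in> {a..b}"
    then show "(g has_real_derivative g' s) (at s within {a..b})"
    proof -
      have "(g has_real_derivative g' s) (at s within {0..})" using d[of s] \<open>s \<in> {a..b}\<close> by auto
      then show ?thesis by (rule DERIV_subset) (use assms in auto)
    qed
  qed
  have dz: "(g has_real_derivative g' z) (at z)" if "a < z" "z < b" for z
  proof -
    have "z \<in> interior {0::real..}" using that assms by simp
    then have "at z within {0..} = at z" by (rule at_within_interior)
    then show ?thesis using d[of z] that by simp
  qed
  obtain l z where z: "a < z" "z < b" "DERIV g z :> l" "g b - g a = (b - a) * l"
    using MVT[OF assms(2) c] dz by (meson real_differentiable_def)
  then have "l = g' z" using dz[of z] DERIV_unique by blast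
  then show ?thesis using z by blast
qed

lemma lip0:
  fixes g :: "real \<Rightarrow> real"
  assumes d: "\<And>t. 0 \<le> t \<Longrightarrow> (g has_real_derivative g' t) (at t within {0..})"
    and B: "\<And>t. 0 \<le> t \<Longrightarrow> \<bar>g' t\<bar> \<le> B"
  shows "0 \<le> s \<Longrightarrow> 0 \<le> t \<Longrightarrow> \<bar>g s - g t\<bar> \<le> B * \<bar>s - t\<bar>"
proof -
  have *: "\<bar>g t - g s\<bar> \<le> B * (t - s)" if "0 \<le> s" "s < t" for s t
  proof -
    have "\<exists>z. s < z \<and> z < t \<and> g t - g s = (t - s) * g' z"
      by (rule mvt0) (use d that in auto)
    then obtain z where z: "s < z" "z < t" "g t - g s = (t - s) * g' z" by blast
    have "\<bar>g t - g s\<bar> = (t - s) * \<bar>g' z\<bar>" using z by (simp add: abs_mult)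
    also have "\<dots> \<le> (t - s) * B" using B[of z] z that by (intro mult_left_mono) auto
    finally show ?thesis by (simp add: mult.commute)
  qed
  assume "0 \<le> s" "0 \<le> t"
  then show ?thesis
    using *[of s t] *[of t s] by (cases s t rule: linorder_cases) (auto simp: abs_minus_commute)
qed

lemma left_bound:
  fixes f :: "real \<Rightarrow> real"
  assumes c: "continuous_on {0..} f" and "\<tau> > 0" and b: "\<And>t. 0 \<le> t \<Longrightarrow> t < \<tau> \<Longrightarrow> k \<le> f t"
  shows "k \<le> f \<tau>"
proof (rule ccontr)
  assume "\<not> k \<le> f \<tau>"
  then have e: "k - f \<tau> > 0" by simp
  obtain d where d: "d > 0" "\<forall>x'\<in>{0..}. dist x' \<tau> < d \<longrightarrow> dist (f x') (f \<tau>) < k - f \<tau>"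
    using c e assms(2) unfolding continuous_on_iff by (metis atLeast_iff less_imp_le)
  define t where "t = max 0 (\<tau> - d/2)"
  have t: "0 \<le> t" "t < \<tau>" "dist t \<tau> < d" using d assms(2) by (auto simp: t_def dist_real_def)
  then have "dist (f t) (f \<tau>) < k - f \<tau>" using d by auto
  moreover have "k \<le> f t" using b t by auto
  ultimately show False by (simp add: dist_real_def)
qed

lemma ucomp:
  fixes X :: "'c::metric_space \<Rightarrow> 'a::metric_space" and \<phi> :: "'a \<Rightarrow> 'b::metric_space"
  assumes "uniformly_continuous_on A X" "X ` A \<subseteq> K" "compact K" "continuous_on K \<phi>"
  shows "uniformly_continuous_on A (\<lambda>t. \<phi> (X t))"
proof -
  have "uniformly_continuous_on K \<phi>" by (rule compact_uniformly_continuous[OF assms(4,3)])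
  then have "uniformly_continuous_on (X ` A) \<phi>" using assms(2)
    unfolding uniformly_continuous_on_def by (meson subsetD)
  then show ?thesis by (rule uniformly_continuous_on_compose[OF assms(1)])
qed

lemma barbalat:
  fixes g :: "real \<Rightarrow> real"
  assumes d: "\<And>t. 0 \<le> t \<Longrightarrow> (g has_real_derivative g' t) (at t within {0..})"
    and lim: "(g \<longlongrightarrow> L) at_top"
    and uc: "uniformly_continuous_on {0..} g'"
  shows "(g' \<longlongrightarrow> 0) at_top"
proof (rule tendstoI)
  fix e :: real assume e: "e > 0"
  obtain dd where dd: "dd > 0" "\<forall>x\<in>{0..}. \<forall>x'\<in>{0..}. dist x' x < dd \<longrightarrow> dist (g' x') (g' x) < e/2"
    using uc e unfolding uniformly_continuous_on_def by (meson half_gt_zero)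
  have "e * dd / 8 > 0" using e dd by simp
  then have "eventually (\<lambda>t. dist (g t) L < e * dd / 8) at_top" by (rule tendstoD[OF lim])
  then obtain T where T: "\<And>t. t \<ge> T \<Longrightarrow> dist (g t) L < e * dd / 8"
    unfolding eventually_at_top_linorder by blast
  show "eventually (\<lambda>t. dist (g' t) 0 < e) at_top"
    unfolding eventually_at_top_linorder
  proof (intro exI allI impI)
    fix t assume t: "t \<ge> max T 0"
    show "dist (g' t) 0 < e"
    proof (rule ccontr)
      assume "\<not> dist (g' t) 0 < e"
      then have ge: "\<bar>g' t\<bar> \<ge> e" by simp
      have "\<exists>z. t < z \<and> z < t + dd/2 \<and> g (t + dd/2) - g t = (t + dd/2 - t) * g' z"
        by (rule mvt0) (use d t dd in auto)
      then obtain z where z: "t < z" "z < t + dd/2" "g (t + dd/2) - g t = (dd/2) * g' z" by auto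
      have "dist (g' z) (g' t) < e/2" using dd z t by (auto simp: dist_real_def)
      then have "\<bar>g' z\<bar> > e/2" using ge unfolding dist_real_def by arith
      then have "(dd/2) * \<bar>g' z\<bar> > (dd/2) * (e/2)" using dd by (intro mult_strict_left_mono) auto
      moreover have "\<bar>g (t + dd/2) - g t\<bar> = (dd/2) * \<bar>g' z\<bar>"
      proof -
        have "\<bar>g (t + dd/2) - g t\<bar> = \<bar>(dd/2) * g' z\<bar>" by (simp only: z(3))
        also have "\<dots> = (dd/2) * \<bar>g' z\<bar>" using dd(1) by (simp add: abs_mult)
        finally show ?thesis .
      qed
      ultimately have big: "\<bar>g (t + dd/2) - g t\<bar> > e * dd / 4" by (simp add: algebra_simps)
      have "dist (g (t + dd/2)) L < e * dd / 8" "dist (g t) L < e * dd / 8" using T t dd by auto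
      then have "\<bar>g (t + dd/2) - g t\<bar> < e * dd / 4" unfolding dist_real_def by arith
      then show False using big by simp
    qed
  qed
qed


locale sys =
  fixes \<Lambda> b m a1 a2 \<sigma> Se Ee Ie :: real and S E I :: "real \<Rightarrow> real"
  assumes pars: "\<Lambda> > 0" "b > 0" "m > 0" "a1 > 0" "a2 > 0" "\<sigma> > 0" "Se > 0" "Ee > 0" "Ie > 0"
    and eq1: "\<Lambda> = b*Se*Ie + m*Se" and eq2: "b*Se*Ie = a1*Ee" and eq3: "\<sigma>*Ee = a2*Ie"
    and dS: "\<And>t. t \<ge> 0 \<Longrightarrow> (S has_real_derivative (\<Lambda> - b*S t*I t - m*S t)) (at t within {0..})"
    and dE: "\<And>t. t \<ge> 0 \<Longrightarrow> (E has_real_derivative (b*S t*I t - a1*E t)) (at t within {0..})"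
    and dI: "\<And>t. t \<ge> 0 \<Longrightarrow> (I has_real_derivative (\<sigma>*E t - a2*I t)) (at t within {0..})"
    and pos0: "S 0 > 0" "E 0 > 0" "I 0 > 0"
begin

definition W :: "real \<Rightarrow> real \<Rightarrow> real \<Rightarrow> real" where
  "W s e i = m*(s-Se)^2/s + b*Se*Ie*(Se/s + s*i*Ee/(Se*Ie*e) + e*Ie/(Ee*i) - 3)"

definition V :: "real \<Rightarrow> real" where
  "V t = G Se (S t) + G Ee (E t) + (a1/\<sigma>) * G Ie (I t)"

definition P :: "real \<Rightarrow> bool" where
  "P t \<longleftrightarrow> S t > 0 \<and> E t > 0 \<and> I t > 0"

lemma W_ge: assumes "s > 0" "e > 0" "i > 0" shows "m*(s-Se)^2/s \<le> W s e i"
proof -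
  define u where "u = Se/s"
  define v where "v = s*i*Ee/(Se*Ie*e)"
  define w where "w = e*Ie/(Ee*i)"
  have pos: "u > 0" "v > 0" "w > 0" using assms pars by (auto simp: u_def v_def w_def)
  have "u * v * w = 1" using assms pars by (simp add: u_def v_def w_def field_simps)
  moreover have "ln (u * v * w) = ln u + ln v + ln w" using pos by (simp add: ln_mult)
  ultimately have "ln u + ln v + ln w = 0" by simp
  moreover have "ln u \<le> u - 1" "ln v \<le> v - 1" "ln w \<le> w - 1" using pos by (auto intro: ln_le_minus_one)
  ultimately have "0 \<le> u + v + w - 3" by linarith
  then have "0 \<le> b*Se*Ie*(u + v + w - 3)" using pars by simp
  then show ?thesis by (simp add: W_def u_def v_def w_def)
qed

lemma W_nonneg: assumes "s > 0" "e > 0" "i > 0" shows "0 \<le> W s e i"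
proof -
  have "0 \<le> m*(s-Se)^2/s" using assms pars by simp
  then show ?thesis using W_ge[OF assms] by linarith
qed

lemma V_deriv: assumes "t \<ge> 0" "P t"
  shows "(V has_real_derivative - W (S t) (E t) (I t)) (at t within {0..})"
proof -
  have p: "S t > 0" "E t > 0" "I t > 0" using assms by (auto simp: P_def)
  have d1: "((\<lambda>t. G Se (S t)) has_real_derivative (1 - Se/S t) * (\<Lambda> - b*S t*I t - m*S t)) (at t within {0..})"
    by (rule DERIV_chain2[OF G_deriv dS]) (use pars p assms in auto)
  have d2: "((\<lambda>t. G Ee (E t)) has_real_derivative (1 - Ee/E t) * (b*S t*I t - a1*E t)) (at t within {0..})"
    by (rule DERIV_chain2[OF G_deriv dE]) (use pars p assms in auto)
  have d3: "((\<lambda>t. G Ie (I t)) has_real_derivative (1 - Ie/I t) * (\<sigma>*E t - a2*I t)) (at t within {0..})"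
    by (rule DERIV_chain2[OF G_deriv dI]) (use pars p assms in auto)
  have d: "(V has_real_derivative ((1 - Se/S t) * (\<Lambda> - b*S t*I t - m*S t) + (1 - Ee/E t) * (b*S t*I t - a1*E t)
      + (a1/\<sigma>) * ((1 - Ie/I t) * (\<sigma>*E t - a2*I t)))) (at t within {0..})"
    unfolding V_def[abs_def] by (intro DERIV_add DERIV_cmult d1 d2 d3)
  have a2e: "a2 = \<sigma>*Ee/Ie" using eq3 pars by (simp add: field_simps)
  have a1e: "a1 = b*Se*Ie/Ee" using eq2 pars by (simp add: field_simps)
  have "(1 - Se/S t) * (\<Lambda> - b*S t*I t - m*S t) + (1 - Ee/E t) * (b*S t*I t - a1*E t)
      + (a1/\<sigma>) * ((1 - Ie/I t) * (\<sigma>*E t - a2*I t)) = - W (S t) (E t) (I t)"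
    unfolding W_def eq1 a2e a1e using p pars
    by (simp add: field_simps) (simp add: algebra_simps power2_eq_square)
  then show ?thesis using d by simp
qed


lemma V_dec: assumes "0 \<le> t1" "t1 \<le> t2" "\<And>s. t1 \<le> s \<Longrightarrow> s \<le> t2 \<Longrightarrow> P s"
  shows "V t2 \<le> V t1"
proof (cases "t1 = t2")
  case False
  then have lt: "t1 < t2" using assms by simp
  have "\<exists>z. t1 < z \<and> z < t2 \<and> V t2 - V t1 = (t2 - t1) * (\<lambda>s. - W (S s) (E s) (I s)) z"
    by (rule mvt0[OF assms(1) lt]) (rule V_deriv, use assms in auto)
  then obtain z where z: "t1 < z" "z < t2" "V t2 - V t1 = (t2 - t1) * (- W (S z) (E z) (I z))" by auto
  have "P z" using assms z by auto
  then have "0 \<le> W (S z) (E z) (I z)" by (intro W_nonneg) (auto simp: P_def)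
  then have "(t2 - t1) * (- W (S z) (E z) (I z)) \<le> 0" using lt by (simp add: mult_nonneg_nonpos)
  then show ?thesis using z by simp
qed simp

lemma V_terms: assumes "P t"
  shows "G Se (S t) \<le> V t" "G Ee (E t) \<le> V t" "G Ie (I t) \<le> V t * \<sigma> / a1"
proof -
  have g: "0 \<le> G Se (S t)" "0 \<le> G Ee (E t)" "0 \<le> G Ie (I t)"
    using assms pars by (auto simp: P_def intro!: G_nonneg)
  have c: "0 \<le> (a1/\<sigma>) * G Ie (I t)" using g pars by simp
  show "G Se (S t) \<le> V t" "G Ee (E t) \<le> V t" using g c by (auto simp: V_def)
  have "(a1/\<sigma>) * G Ie (I t) \<le> V t" using g by (auto simp: V_def)
  then show "G Ie (I t) \<le> V t * \<sigma> / a1" using pars by (simp add: field_simps)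
qed

lemma contS: "continuous_on {0..} S" by (rule cont0) (rule dS)
lemma contE: "continuous_on {0..} E" by (rule cont0) (rule dE)
lemma contI: "continuous_on {0..} I" by (rule cont0) (rule dI)

lemma P0: "P 0" using pos0 by (simp add: P_def)

lemma all_pos: "\<forall>t\<ge>0. P t"
proof (rule ccontr)
  assume "\<not> (\<forall>t\<ge>0. P t)"
  define U where "U = {t. t \<ge> 0 \<and> \<not> P t}"
  have Une: "U \<noteq> {}" using \<open>\<not> (\<forall>t\<ge>0. P t)\<close> by (auto simp: U_def)
  have Ueq: "U = ({0..} \<inter> S -` {..0}) \<union> ({0..} \<inter> E -` {..0}) \<union> ({0..} \<inter> I -` {..0})"
    by (auto simp: U_def P_def not_less)
  have "closed U" unfolding Ueq
    by (intro closed_Un continuous_closed_preimage contS contE contI) auto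
  moreover have "bdd_below U" by (auto simp: U_def bdd_below_def)
  ultimately have "Inf U \<in> U" using Une by (rule closed_contains_Inf[rotated 2, OF _ Une] | blast intro: closed_contains_Inf)
  define \<tau> where "\<tau> = Inf U"
  have tU: "\<tau> \<in> U" using \<open>Inf U \<in> U\<close> by (simp add: \<tau>_def)
  then have "\<tau> \<ge> 0" "\<not> P \<tau>" by (auto simp: U_def)
  then have tpos: "\<tau> > 0" using P0 by (cases "\<tau> = 0") auto
  have before: "P t" if "0 \<le> t" "t < \<tau>" for t
  proof (rule ccontr)
    assume "\<not> P t"
    then have "t \<in> U" using that by (auto simp: U_def)
    then have "\<tau> \<le> t" unfolding \<tau>_def using \<open>bdd_below U\<close> by (rule cInf_lower)
    then show False using that by simp
  qed
  define C where "C = V 0"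
  have Vb: "V t \<le> C" if "0 \<le> t" "t < \<tau>" for t
    unfolding C_def by (rule V_dec) (use that before in auto)
  have bS: "Se * exp (-(C+Se)/Se) \<le> S t" if "0 \<le> t" "t < \<tau>" for t
    using before[OF that] V_terms(1)[OF before[OF that]] Vb[OF that] pars
    by (intro G_low) (auto simp: P_def)
  have bE: "Ee * exp (-(C+Ee)/Ee) \<le> E t" if "0 \<le> t" "t < \<tau>" for t
    using before[OF that] V_terms(2)[OF before[OF that]] Vb[OF that] pars
    by (intro G_low) (auto simp: P_def)
  have bI: "Ie * exp (-(C * \<sigma> / a1 + Ie)/Ie) \<le> I t" if "0 \<le> t" "t < \<tau>" for t
  proof (rule G_low)
    show "0 < Ie" "0 < I t" using pars before[OF that] by (auto simp: P_def)
    have "V t * \<sigma> / a1 \<le> C * \<sigma> / a1" using Vb[OF that] pars by (simp add: divide_right_mono)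
    then show "G Ie (I t) \<le> C * \<sigma> / a1" using V_terms(3)[OF before[OF that]] by linarith
  qed
  have "Se * exp (-(C+Se)/Se) \<le> S \<tau>" by (rule left_bound[OF contS tpos bS])
  moreover have "Ee * exp (-(C+Ee)/Ee) \<le> E \<tau>" by (rule left_bound[OF contE tpos bE])
  moreover have "Ie * exp (-(C * \<sigma> / a1 + Ie)/Ie) \<le> I \<tau>" by (rule left_bound[OF contI tpos bI])
  ultimately have "P \<tau>" using pars unfolding P_def
    by (smt (verit) exp_gt_zero mult_pos_pos)
  then show False using \<open>\<not> P \<tau>\<close> by simp
qed

lemma V_mono: "0 \<le> t1 \<Longrightarrow> t1 \<le> t2 \<Longrightarrow> V t2 \<le> V t1"
  by (rule V_dec) (use all_pos in auto)


lemma V_bounded: "t \<ge> 0 \<Longrightarrow> V t \<le> V 0" by (rule V_mono) auto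

definition "C0 = V 0"
definition "lS = Se * exp (-(C0+Se)/Se)"
definition "lE = Ee * exp (-(C0+Ee)/Ee)"
definition "lI = Ie * exp (-(C0 * \<sigma> / a1 + Ie)/Ie)"
definition "uS = (sqrt Se + sqrt C0)^2"
definition "uE = (sqrt Ee + sqrt C0)^2"
definition "uI = (sqrt Ie + sqrt (C0 * \<sigma> / a1))^2"

lemma k_pos: "lS > 0" "lE > 0" "lI > 0" using pars by (auto simp: lS_def lE_def lI_def)

lemma bounds: assumes "t \<ge> 0"
  shows "lS \<le> S t" "S t \<le> uS" "lE \<le> E t" "E t \<le> uE" "lI \<le> I t" "I t \<le> uI"
proof -
  have p: "P t" using all_pos assms by auto
  then have p': "S t > 0" "E t > 0" "I t > 0" by (auto simp: P_def)
  have v: "V t \<le> C0" using V_bounded assms by (simp add: C0_def)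
  have gS: "G Se (S t) \<le> C0" using V_terms(1)[OF p] v by linarith
  have gE: "G Ee (E t) \<le> C0" using V_terms(2)[OF p] v by linarith
  have "V t * \<sigma> / a1 \<le> C0 * \<sigma> / a1" using v pars by (simp add: divide_right_mono)
  then have gI: "G Ie (I t) \<le> C0 * \<sigma> / a1" using V_terms(3)[OF p] by linarith
  show "lS \<le> S t" unfolding lS_def by (rule G_low[OF _ _ gS]) (use pars p' in auto)
  show "S t \<le> uS" unfolding uS_def by (rule G_up[OF _ _ gS]) (use pars p' in auto)
  show "lE \<le> E t" unfolding lE_def by (rule G_low[OF _ _ gE]) (use pars p' in auto)
  show "E t \<le> uE" unfolding uE_def by (rule G_up[OF _ _ gE]) (use pars p' in auto)
  show "lI \<le> I t" unfolding lI_def by (rule G_low[OF _ _ gI]) (use pars p' in auto)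
  show "I t \<le> uI" unfolding uI_def by (rule G_up[OF _ _ gI]) (use pars p' in auto)
qed

definition "BdS = \<Lambda> + b*uS*uI + m*uS"
definition "BdE = b*uS*uI + a1*uE"
definition "BdI = \<sigma>*uE + a2*uI"

lemma lipS: "0 \<le> s \<Longrightarrow> 0 \<le> t \<Longrightarrow> \<bar>S s - S t\<bar> \<le> BdS * \<bar>s - t\<bar>"
proof (rule lip0[OF dS])
  fix t :: real assume t: "0 \<le> t"
  note bd = bounds[OF t] k_pos
  have "0 \<le> b * S t * I t" "b * S t * I t \<le> b * uS * uI" "0 \<le> m * S t" "m * S t \<le> m * uS"
    using bd pars by (auto intro!: mult_mono)
  then show "\<bar>\<Lambda> - b * S t * I t - m * S t\<bar> \<le> BdS" using pars unfolding BdS_def by linarith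
qed

lemma lipE: "0 \<le> s \<Longrightarrow> 0 \<le> t \<Longrightarrow> \<bar>E s - E t\<bar> \<le> BdE * \<bar>s - t\<bar>"
proof (rule lip0[OF dE])
  fix t :: real assume t: "0 \<le> t"
  note bd = bounds[OF t] k_pos
  have "0 \<le> b * S t * I t" "b * S t * I t \<le> b * uS * uI" "0 \<le> a1 * E t" "a1 * E t \<le> a1 * uE"
    using bd pars by (auto intro!: mult_mono)
  then show "\<bar>b * S t * I t - a1 * E t\<bar> \<le> BdE" using pars unfolding BdE_def by linarith
qed

lemma lipI: "0 \<le> s \<Longrightarrow> 0 \<le> t \<Longrightarrow> \<bar>I s - I t\<bar> \<le> BdI * \<bar>s - t\<bar>"
proof (rule lip0[OF dI])
  fix t :: real assume t: "0 \<le> t"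
  note bd = bounds[OF t] k_pos
  have "0 \<le> \<sigma> * E t" "\<sigma> * E t \<le> \<sigma> * uE" "0 \<le> a2 * I t" "a2 * I t \<le> a2 * uI"
    using bd pars by (auto intro!: mult_mono)
  then show "\<bar>\<sigma> * E t - a2 * I t\<bar> \<le> BdI" using pars unfolding BdI_def by linarith
qed

lemma B_nonneg: "0 \<le> BdS" "0 \<le> BdE" "0 \<le> BdI"
proof -
  have "\<bar>S 1 - S 0\<bar> \<le> BdS * 1" "\<bar>E 1 - E 0\<bar> \<le> BdE * 1" "\<bar>I 1 - I 0\<bar> \<le> BdI * 1"
    using lipS[of 1 0] lipE[of 1 0] lipI[of 1 0] by auto
  then show "0 \<le> BdS" "0 \<le> BdE" "0 \<le> BdI" by linarith+
qed

lemma dist3: "dist ((x1::real), (y1::real), (z1::real)) (x2, y2, z2) \<le> \<bar>x1 - x2\<bar> + \<bar>y1 - y2\<bar> + \<bar>z1 - z2\<bar>"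
proof -
  have "dist (x1, y1, z1) (x2, y2, z2) = norm (x1 - x2, y1 - y2, z1 - z2)" by (simp add: dist_norm)
  also have "\<dots> \<le> norm (x1 - x2) + norm (y1 - y2, z1 - z2)" by (rule norm_Pair_le)
  also have "norm (y1 - y2, z1 - z2) \<le> norm (y1 - y2) + norm (z1 - z2)" by (rule norm_Pair_le)
  finally show ?thesis by simp
qed

lemma X_uc: "uniformly_continuous_on {0..} (\<lambda>t. (S t, E t, I t))"
  unfolding uniformly_continuous_on_def
proof (intro allI impI)
  fix e :: real assume e: "e > 0"
  define B where "B = BdS + BdE + BdI + 1"
  have B: "B > 0" using B_nonneg by (simp add: B_def)
  show "\<exists>d>0. \<forall>x\<in>{0..}. \<forall>x'\<in>{0..}. dist x' x < d \<longrightarrow> dist (S x', E x', I x') (S x, E x, I x) < e"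
  proof (intro exI[of _ "e / B"] conjI ballI impI)
    show "e / B > 0" using e B by simp
    fix x x' :: real assume x: "x \<in> {0..}" "x' \<in> {0..}" and d: "dist x' x < e / B"
    have "dist (S x', E x', I x') (S x, E x, I x) \<le> \<bar>S x' - S x\<bar> + \<bar>E x' - E x\<bar> + \<bar>I x' - I x\<bar>"
      by (rule dist3)
    also have "\<dots> \<le> (BdS + BdE + BdI) * \<bar>x' - x\<bar>"
      using lipS[of x' x] lipE[of x' x] lipI[of x' x] x by (simp add: algebra_simps)
    also have "\<dots> \<le> B * \<bar>x' - x\<bar>" by (simp add: B_def mult_right_mono)
    also have "\<dots> < B * (e / B)" using d B by (intro mult_strict_left_mono) (auto simp: dist_real_def)
    also have "\<dots> = e" using B by simp
    finally show "dist (S x', E x', I x') (S x, E x, I x) < e" .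
  qed
qed

definition "KK = {lS..uS} \<times> {lE..uE} \<times> {lI..uI}"

lemma KK_compact: "compact KK" unfolding KK_def by (intro compact_Times compact_Icc)

lemma X_in_K: "(\<lambda>t. (S t, E t, I t)) ` {0..} \<subseteq> KK"
  using bounds by (auto simp: KK_def)

lemma KK_pos: "y \<in> KK \<Longrightarrow> fst y > 0 \<and> fst (snd y) > 0 \<and> snd (snd y) > 0"
  using k_pos by (auto simp: KK_def)

lemma uc_comp: fixes \<phi> :: "real \<times> real \<times> real \<Rightarrow> real" assumes "continuous_on KK \<phi>" shows "uniformly_continuous_on {0..} (\<lambda>t. \<phi> (S t, E t, I t))"
  using assms by (rule ucomp[OF X_uc X_in_K KK_compact])

lemma contW: "continuous_on KK (\<lambda>y. - W (fst y) (fst (snd y)) (snd (snd y)))"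
  unfolding W_def
  apply (intro continuous_intros)
  using pars by (auto dest: KK_pos)


lemma V_conv: "\<exists>L. (V \<longlongrightarrow> L) at_top"
proof -
  define L where "L = Inf (V ` {0..})"
  have Vnn: "0 \<le> V t" if "t \<ge> 0" for t
  proof -
    have "P t" using all_pos that by auto
    then have "G Se (S t) \<le> V t" "0 \<le> G Se (S t)" using V_terms(1) pars by (auto simp: P_def intro: G_nonneg)
    then show ?thesis by linarith
  qed
  have bdd: "bdd_below (V ` {0..})" using Vnn by (auto simp: bdd_below_def)
  have lo: "L \<le> V t" if "t \<ge> 0" for t
  proof -
    have "V t \<in> V ` {0..}" using that by simp
    then show ?thesis unfolding L_def using bdd by (rule cInf_lower)
  qed
  have "(V \<longlongrightarrow> L) at_top"
  proof (rule order_tendstoI)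
    fix a assume a: "a < L"
    have "\<forall>t\<ge>0. a < V t" using lo a by (meson less_le_trans)
    then show "eventually (\<lambda>t. a < V t) at_top"
      unfolding eventually_at_top_linorder by blast
  next
    fix a assume "L < a"
    then have "\<exists>x\<in>V ` {0..}. x < a" unfolding L_def by (intro cInf_lessD) auto
    then obtain t0 where t0: "t0 \<ge> 0" "V t0 < a" by auto
    have "\<forall>t\<ge>t0. V t < a"
    proof (intro allI impI)
      fix t assume "t \<ge> t0"
      then have "V t \<le> V t0" using t0 by (intro V_mono) auto
      then show "V t < a" using t0 by simp
    qed
    then show "eventually (\<lambda>t. V t < a) at_top"
      unfolding eventually_at_top_linorder by blast
  qed
  then show ?thesis by blast
qed

lemma W_to_0: "((\<lambda>t. W (S t) (E t) (I t)) \<longlongrightarrow> 0) at_top"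
proof -
  obtain L where L: "(V \<longlongrightarrow> L) at_top" using V_conv by blast
  have "((\<lambda>t. - W (S t) (E t) (I t)) \<longlongrightarrow> 0) at_top"
  proof (rule barbalat[OF _ L])
    show "(V has_real_derivative - W (S t) (E t) (I t)) (at t within {0..})" if "0 \<le> t" for t
      using V_deriv all_pos that by auto
    show "uniformly_continuous_on {0..} (\<lambda>t. - W (S t) (E t) (I t))"
      using uc_comp[OF contW] by simp
  qed
  then show ?thesis using tendsto_minus[of "\<lambda>t. - W (S t) (E t) (I t)" 0 at_top] by simp
qed

lemma S_lim: "(S \<longlongrightarrow> Se) at_top"
proof -
  define Wt where "Wt = (\<lambda>t. W (S t) (E t) (I t))"
  have ev: "eventually (\<lambda>t. (S t - Se)^2 \<le> (uS / m) * Wt t) at_top"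
    unfolding eventually_at_top_linorder
  proof (intro exI[of _ 0] allI impI)
    fix t :: real assume t: "t \<ge> 0"
    have p: "S t > 0" "E t > 0" "I t > 0" using all_pos t by (auto simp: P_def)
    have w: "m*(S t-Se)^2/S t \<le> W (S t) (E t) (I t)" by (rule W_ge[OF p])
    then have "m*(S t-Se)^2 \<le> S t * W (S t) (E t) (I t)" using p by (simp add: field_simps)
    also have "\<dots> \<le> uS * W (S t) (E t) (I t)"
      using bounds[OF t] W_nonneg[OF p] by (intro mult_right_mono) auto
    finally show "(S t - Se)^2 \<le> (uS / m) * Wt t" using pars by (simp add: field_simps Wt_def)
  qed
  have e1: "eventually (\<lambda>t. 0 \<le> (S t - Se)^2) at_top" by simp
  have "((\<lambda>t. (uS / m) * Wt t) \<longlongrightarrow> (uS/m) * 0) at_top"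
    unfolding Wt_def by (rule tendsto_mult[OF tendsto_const W_to_0])
  then have l2: "((\<lambda>t. (uS / m) * Wt t) \<longlongrightarrow> 0) at_top" by simp
  have sq: "((\<lambda>t. (S t - Se)^2) \<longlongrightarrow> 0) at_top"
    by (rule tendsto_sandwich[OF e1 ev tendsto_const l2])
  have "((\<lambda>t. sqrt ((S t - Se)^2)) \<longlongrightarrow> sqrt 0) at_top" by (rule tendsto_real_sqrt[OF sq])
  then have "((\<lambda>t. \<bar>S t - Se\<bar>) \<longlongrightarrow> 0) at_top" by simp
  then have "((\<lambda>t. S t - Se) \<longlongrightarrow> 0) at_top" by (simp only: tendsto_rabs_zero_iff)
  then show ?thesis by (rule LIM_zero_cancel)
qed

lemma I_lim: "(I \<longlongrightarrow> Ie) at_top"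
proof -
  define D where "D = (\<lambda>t. \<Lambda> - b*S t*I t - m*S t)"
  have d0: "(D \<longlongrightarrow> 0) at_top"
  proof (rule barbalat[OF _ S_lim])
    show "(S has_real_derivative D t) (at t within {0..})" if "0 \<le> t" for t
      unfolding D_def by (rule dS[OF that])
    have "uniformly_continuous_on {0..} (\<lambda>t. (\<lambda>y. \<Lambda> - b * fst y * snd (snd y) - m * fst y) (S t, E t, I t))"
      by (rule uc_comp) (intro continuous_intros)
    then show "uniformly_continuous_on {0..} D" by (simp add: D_def)
  qed
  have "((\<lambda>t. (\<Lambda> - m * S t - D t) / (b * S t)) \<longlongrightarrow> (\<Lambda> - m * Se - 0) / (b * Se)) at_top"
    by (rule tendsto_divide tendsto_diff tendsto_const tendsto_mult S_lim d0)+ (use pars in simp)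
  moreover have "(\<Lambda> - m * Se - 0) / (b * Se) = Ie" using pars eq1 by (simp add: field_simps)
  moreover have "eventually (\<lambda>t. (\<Lambda> - m * S t - D t) / (b * S t) = I t) at_top"
    unfolding eventually_at_top_linorder
  proof (intro exI[of _ 0] allI impI)
    fix t :: real assume "t \<ge> 0"
    then have "S t > 0" using all_pos by (auto simp: P_def)
    then show "(\<Lambda> - m * S t - D t) / (b * S t) = I t" using pars by (simp add: field_simps D_def)
  qed
  ultimately show ?thesis using Lim_transform_eventually by metis
qed

lemma E_lim: "(E \<longlongrightarrow> Ee) at_top"
proof -
  define D where "D = (\<lambda>t. \<sigma> * E t - a2 * I t)"
  have d0: "(D \<longlongrightarrow> 0) at_top"
  proof (rule barbalat[OF _ I_lim])
    show "(I has_real_derivative D t) (at t within {0..})" if "0 \<le> t" for t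
      unfolding D_def by (rule dI[OF that])
    have "uniformly_continuous_on {0..} (\<lambda>t. (\<lambda>y. \<sigma> * fst (snd y) - a2 * snd (snd y)) (S t, E t, I t))"
      by (rule uc_comp) (intro continuous_intros)
    then show "uniformly_continuous_on {0..} D" by (simp add: D_def)
  qed
  have "((\<lambda>t. (D t + a2 * I t) / \<sigma>) \<longlongrightarrow> (0 + a2 * Ie) / \<sigma>) at_top"
    by (rule tendsto_divide tendsto_add tendsto_const tendsto_mult I_lim d0)+ (use pars in simp)
  moreover have "(0 + a2 * Ie) / \<sigma> = Ee" using pars eq3 by (simp add: field_simps)
  moreover have "(D t + a2 * I t) / \<sigma> = E t" for t using pars by (simp add: D_def)
  ultimately show ?thesis by simp
qed

end
lemma int_pos:
  assumes "y \<in> interior (Omega N)"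
  shows "fst y > 0 \<and> fst (snd y) > 0 \<and> snd (snd y) > 0"
proof -
  obtain e where e: "e > 0" "ball y e \<subseteq> Omega N" using assms mem_interior by blast
  obtain s0 e0 i0 where y: "y = (s0, e0, i0)" by (cases y) auto
  have "(s0 - e/2, e0, i0) \<in> ball y e" using e by (simp add: y dist_norm norm_Pair)
  then have 1: "s0 - e/2 \<ge> 0" using e by (auto simp: Omega_def)
  have "(s0, e0 - e/2, i0) \<in> ball y e" using e by (simp add: y dist_norm norm_Pair)
  then have 2: "e0 - e/2 \<ge> 0" using e by (auto simp: Omega_def)
  have "(s0, e0, i0 - e/2) \<in> ball y e" using e by (simp add: y dist_norm norm_Pair)
  then have 3: "i0 - e/2 \<ge> 0" using e by (auto simp: Omega_def)
  show ?thesis using 1 2 3 e by (simp add: y)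
qed

lemma solution_sys:
  fixes N \<mu> \<beta> \<sigma> \<gamma> p \<rho> Se Ee Ie :: real
  assumes "N > 0" "\<mu> > 0" "\<beta> > 0" "\<sigma> > 0" "\<gamma> > 0" "p > 0" "0 < \<rho>" "\<rho> < 1"
    and pe: "Se > 0" "Ee > 0" "Ie > 0"
    and eq1: "\<mu>*N = (\<beta>*(1-\<rho>)/N)*Se*Ie + (p/N+\<mu>)*Se"
    and eq2: "(\<beta>*(1-\<rho>)/N)*Se*Ie = (\<sigma>+\<mu>)*Ee" and eq3: "\<sigma>*Ee = (\<gamma>+\<mu>)*Ie"
    and sol: "is_forward_solution (seir_field N \<mu> \<beta> \<sigma> \<gamma> p \<rho>) x"
    and x0: "x 0 \<in> interior (Omega N)"
  shows "sys (\<mu>*N) (\<beta>*(1-\<rho>)/N) (p/N+\<mu>) (\<sigma>+\<mu>) (\<gamma>+\<mu>) \<sigma> Se Ee Ie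
           (\<lambda>t. fst (x t)) (\<lambda>t. fst (snd (x t))) (\<lambda>t. snd (snd (x t)))"
proof
  show "\<mu>*N > 0" "\<beta>*(1-\<rho>)/N > 0" "p/N+\<mu> > 0" "\<sigma>+\<mu> > 0" "\<gamma>+\<mu> > 0" "\<sigma> > 0" "Se > 0" "Ee > 0" "Ie > 0"
    using assms(1-11) by (auto intro!: add_pos_pos divide_pos_pos mult_pos_pos)
  show "\<mu>*N = (\<beta>*(1-\<rho>)/N)*Se*Ie + (p/N+\<mu>)*Se" "(\<beta>*(1-\<rho>)/N)*Se*Ie = (\<sigma>+\<mu>)*Ee" "\<sigma>*Ee = (\<gamma>+\<mu>)*Ie"
    by (rule eq1 eq2 eq3)+
  show "fst (x 0) > 0" "fst (snd (x 0)) > 0" "snd (snd (x 0)) > 0" using int_pos[OF x0] by auto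
next
  fix t :: real assume t: "t \<ge> 0"
  have d: "(x has_vector_derivative seir_field N \<mu> \<beta> \<sigma> \<gamma> p \<rho> (x t)) (at t within {0..})"
    using sol t by (simp add: is_forward_solution_def)
  obtain s e i where xt: "x t = (s, e, i)" by (cases "x t") auto
  have f: "seir_field N \<mu> \<beta> \<sigma> \<gamma> p \<rho> (x t) =
     (\<mu> * N - \<beta> * (1 - \<rho>) / N * s * i - p / N * s - \<mu> * s,
        \<beta> * (1 - \<rho>) / N * s * i - (\<sigma> + \<mu>) * e,
        \<sigma> * e - (\<gamma> + \<mu>) * i)" by (simp add: seir_field_def xt)
  have d1: "((\<lambda>t. fst (x t)) has_real_derivative fst (seir_field N \<mu> \<beta> \<sigma> \<gamma> p \<rho> (x t))) (at t within {0..})"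
    by (rule deriv_fst[OF d])
  have d23: "((\<lambda>t. snd (x t)) has_vector_derivative snd (seir_field N \<mu> \<beta> \<sigma> \<gamma> p \<rho> (x t))) (at t within {0..})"
    by (rule deriv_snd[OF d])
  have d2: "((\<lambda>t. fst (snd (x t))) has_real_derivative fst (snd (seir_field N \<mu> \<beta> \<sigma> \<gamma> p \<rho> (x t)))) (at t within {0..})"
    by (rule deriv_fst[OF d23])
  have d3: "((\<lambda>t. snd (snd (x t))) has_real_derivative snd (snd (seir_field N \<mu> \<beta> \<sigma> \<gamma> p \<rho> (x t)))) (at t within {0..})"
    unfolding has_real_derivative_iff_has_vector_derivative by (rule deriv_snd[OF d23])
  show "((\<lambda>t. fst (x t)) has_real_derivative (\<mu>*N - (\<beta>*(1-\<rho>)/N) * fst (x t) * snd (snd (x t)) - (p/N+\<mu>) * fst (x t))) (at t within {0..})"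
    using d1 unfolding f by (simp add: xt algebra_simps)
  show "((\<lambda>t. fst (snd (x t))) has_real_derivative ((\<beta>*(1-\<rho>)/N) * fst (x t) * snd (snd (x t)) - (\<sigma>+\<mu>) * fst (snd (x t)))) (at t within {0..})"
    using d2 unfolding f by (simp add: xt algebra_simps)
  show "((\<lambda>t. snd (snd (x t))) has_real_derivative (\<sigma> * fst (snd (x t)) - (\<gamma>+\<mu>) * snd (snd (x t)))) (at t within {0..})"
    using d3 unfolding f by (simp add: xt algebra_simps)
qed


lemma eq1_aux:
  fixes k A B N \<sigma> \<mu> Q :: real
  assumes "k > 0" "A > 0" "B > 0" "N > 0" "\<sigma> > 0"
  shows "\<mu>*N = (k/N)*(A*B*N/(\<sigma>*k))*((\<mu>*N*\<sigma>*k - A*B*Q)/(A*B*k)) + (Q/N)*(A*B*N/(\<sigma>*k))"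
  using assms by (simp add: field_simps)

theorem mainTheorem12:
  fixes N \<mu> \<beta> \<sigma> \<gamma> p \<rho> :: real
  assumes "N > 0" "\<mu> > 0" "\<beta> > 0" "\<sigma> > 0" "\<gamma> > 0" "p > 0"
    and "0 < \<rho>" "\<rho> < 1"
    and "\<mu> * N * \<sigma> * \<beta> * (1 - \<rho>) / ((\<sigma> + \<mu>) * (\<gamma> + \<mu>) * (p + \<mu> * N)) > 1"
  shows "let Se = (\<sigma> + \<mu>) * (\<gamma> + \<mu>) * N / (\<sigma> * \<beta> * (1 - \<rho>));
             Ie = (\<mu> * N * \<sigma> * \<beta> * (1 - \<rho>) - (\<sigma> + \<mu>) * (\<gamma> + \<mu>) * (p + \<mu> * N))
                  / ((\<sigma> + \<mu>) * (\<gamma> + \<mu>) * \<beta> * (1 - \<rho>));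
             Ee = (\<gamma> + \<mu>) / \<sigma> * Ie
         in globally_asymptotically_stable_in (seir_field N \<mu> \<beta> \<sigma> \<gamma> p \<rho>)
              (interior (Omega N)) (Se, Ee, Ie)"
proof -
  define Se where "Se = (\<sigma> + \<mu>) * (\<gamma> + \<mu>) * N / (\<sigma> * \<beta> * (1 - \<rho>))"
  define Ie where "Ie = (\<mu> * N * \<sigma> * \<beta> * (1 - \<rho>) - (\<sigma> + \<mu>) * (\<gamma> + \<mu>) * (p + \<mu> * N))
                  / ((\<sigma> + \<mu>) * (\<gamma> + \<mu>) * \<beta> * (1 - \<rho>))"
  define Ee where "Ee = (\<gamma> + \<mu>) / \<sigma> * Ie"
  define f where "f = seir_field N \<mu> \<beta> \<sigma> \<gamma> p \<rho>"
  have r: "1 - \<rho> > 0" using assms by simp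
  have Bpos: "(\<sigma> + \<mu>) * (\<gamma> + \<mu>) * (p + \<mu> * N) > 0" using assms by (intro mult_pos_pos add_pos_pos) auto
  then have "(\<sigma> + \<mu>) * (\<gamma> + \<mu>) * (p + \<mu> * N) < \<mu> * N * \<sigma> * \<beta> * (1 - \<rho>)"
    using assms(9) by (simp add: less_divide_eq)
  then have Ipos: "Ie > 0" unfolding Ie_def using assms r by (intro divide_pos_pos) auto
  have Spos: "Se > 0" unfolding Se_def using assms r by simp
  have Epos: "Ee > 0" unfolding Ee_def using assms Ipos by simp
  have eq1: "\<mu>*N = (\<beta>*(1-\<rho>)/N)*Se*Ie + (p/N+\<mu>)*Se"
  proof -
    define k where "k = \<beta>*(1-\<rho>)"
    define A where "A = \<sigma>+\<mu>"
    define B where "B = \<gamma>+\<mu>"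
    define Q where "Q = p+\<mu>*N"
    have k: "k > 0" using assms r by (simp add: k_def)
    have Se': "Se = A*B*N/(\<sigma>*k)" by (simp add: Se_def A_def B_def k_def mult.assoc)
    have Ie': "Ie = (\<mu>*N*\<sigma>*k - A*B*Q)/(A*B*k)" by (simp add: Ie_def A_def B_def k_def Q_def mult.assoc)
    have Q': "p/N+\<mu> = Q/N" using assms by (simp add: Q_def field_simps)
    have "\<mu>*N = (k/N)*(A*B*N/(\<sigma>*k))*((\<mu>*N*\<sigma>*k - A*B*Q)/(A*B*k)) + (Q/N)*(A*B*N/(\<sigma>*k))"
      by (rule eq1_aux) (use k assms in \<open>auto simp: A_def B_def\<close>)
    then show ?thesis unfolding Se' Ie' Q' k_def by simp
  qed
  have eq2: "(\<beta>*(1-\<rho>)/N)*Se*Ie = (\<sigma>+\<mu>)*Ee"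
    unfolding Se_def Ee_def using assms r by (simp add: field_simps)
  have eq3: "\<sigma>*Ee = (\<gamma>+\<mu>)*Ie" unfolding Ee_def using assms by simp
  have key: "sys (\<mu>*N) (\<beta>*(1-\<rho>)/N) (p/N+\<mu>) (\<sigma>+\<mu>) (\<gamma>+\<mu>) \<sigma> Se Ee Ie
           (\<lambda>t. fst (x t)) (\<lambda>t. fst (snd (x t))) (\<lambda>t. snd (snd (x t)))"
    if "is_forward_solution f x" "x 0 \<in> interior (Omega N)" for x
    by (rule solution_sys[OF assms(1-8) Spos Epos Ipos eq1 eq2 eq3 that[unfolded f_def]])
  define c where "c = (\<sigma>+\<mu>)/\<sigma>"
  have cpos: "c > 0" using assms by (simp add: c_def)
  have "globally_asymptotically_stable_in f (interior (Omega N)) (Se, Ee, Ie)"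
    unfolding globally_asymptotically_stable_in_def
  proof (intro conjI allI impI)
    fix \<epsilon> :: real assume \<epsilon>: "\<epsilon> > 0"
    define h where "h = \<epsilon>/3"
    have h: "h > 0" using \<epsilon> by (simp add: h_def)
    define sep where "sep a = (sqrt (a+h) - sqrt a)^2" for a
    have sep_pos: "sep a > 0" if "a > 0" for a
    proof -
      have "sqrt a < sqrt (a+h)" using h that by simp
      then show ?thesis by (simp add: sep_def)
    qed
    define \<eta> where "\<eta> = min (sep Se) (min (sep Ee) (c * sep Ie))"
    have \<eta>: "\<eta> > 0" using sep_pos Spos Epos Ipos cpos by (simp add: \<eta>_def)
    define Vf where "Vf y = G Se (fst y) + G Ee (fst (snd y)) + c * G Ie (snd (snd y))" for y :: "real \<times> real \<times> real"
    have Vf0: "Vf (Se, Ee, Ie) = 0" using Spos Epos Ipos by (simp add: Vf_def G_def)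
    have "continuous (at (Se, Ee, Ie)) Vf"
      unfolding Vf_def[abs_def] G_def using Spos Epos Ipos
      by (intro continuous_intros) auto
    then obtain \<delta> where \<delta>: "\<delta> > 0" "\<And>y. dist y (Se, Ee, Ie) < \<delta> \<Longrightarrow> dist (Vf y) (Vf (Se, Ee, Ie)) < \<eta>"
      unfolding continuous_at_eps_delta using \<eta> by metis
    show "\<exists>\<delta>>0. \<forall>x. is_forward_solution f x \<and> x 0 \<in> interior (Omega N) \<and> dist (x 0) (Se, Ee, Ie) < \<delta>
            \<longrightarrow> (\<forall>t\<ge>0. dist (x t) (Se, Ee, Ie) < \<epsilon>)"
    proof (intro exI[of _ \<delta>] conjI allI impI)
      show "\<delta> > 0" by (rule \<delta>(1))
      fix x and t :: real
      assume H: "is_forward_solution f x \<and> x 0 \<in> interior (Omega N) \<and> dist (x 0) (Se, Ee, Ie) < \<delta>"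
        and t: "0 \<le> t"
      interpret s: sys "\<mu>*N" "\<beta>*(1-\<rho>)/N" "p/N+\<mu>" "\<sigma>+\<mu>" "\<gamma>+\<mu>" \<sigma> Se Ee Ie
           "\<lambda>t. fst (x t)" "\<lambda>t. fst (snd (x t))" "\<lambda>t. snd (snd (x t))"
        using key H by blast
      have "dist (Vf (x 0)) 0 < \<eta>" using \<delta>(2)[of "x 0"] H Vf0 by simp
      moreover have "s.V 0 = Vf (x 0)" by (simp add: s.V_def Vf_def c_def)
      ultimately have V0: "s.V 0 < \<eta>" by (simp add: dist_real_def)
      have Vt: "s.V t < \<eta>" using s.V_bounded[OF t] V0 by linarith
      have P: "s.P t" using s.all_pos t by auto
      then have pp: "fst (x t) > 0" "fst (snd (x t)) > 0" "snd (snd (x t)) > 0" by (auto simp: s.P_def)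
      have d1: "\<bar>fst (x t) - Se\<bar> < h"
      proof (rule ccontr)
        assume "\<not> ?thesis"
        then have "sep Se \<le> G Se (fst (x t))" unfolding sep_def using Spos pp h by (intro G_sep) auto
        moreover have "\<eta> \<le> sep Se" by (simp add: \<eta>_def)
        ultimately show False using s.V_terms(1)[OF P] Vt by linarith
      qed
      have d2: "\<bar>fst (snd (x t)) - Ee\<bar> < h"
      proof (rule ccontr)
        assume "\<not> ?thesis"
        then have "sep Ee \<le> G Ee (fst (snd (x t)))" unfolding sep_def using Epos pp h by (intro G_sep) auto
        moreover have "\<eta> \<le> sep Ee" by (simp add: \<eta>_def)
        ultimately show False using s.V_terms(2)[OF P] Vt by linarith
      qed
      have d3: "\<bar>snd (snd (x t)) - Ie\<bar> < h"
      proof (rule ccontr)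
        assume "\<not> ?thesis"
        then have "sep Ie \<le> G Ie (snd (snd (x t)))" unfolding sep_def using Ipos pp h by (intro G_sep) auto
        moreover have "\<eta> \<le> c * sep Ie" by (simp add: \<eta>_def)
        moreover have "G Ie (snd (snd (x t))) \<le> s.V t * \<sigma> / (\<sigma>+\<mu>)" by (rule s.V_terms(3)[OF P])
        moreover have "s.V t * \<sigma> / (\<sigma>+\<mu>) < \<eta> * \<sigma> / (\<sigma>+\<mu>)"
          using Vt assms by (intro divide_strict_right_mono mult_strict_right_mono) auto
        moreover have "c * sep Ie * \<sigma> / (\<sigma>+\<mu>) = sep Ie"
        proof -
          have ne: "\<sigma> + \<mu> \<noteq> 0" "\<sigma> \<noteq> 0" using assms by auto
          have "c * sep Ie * \<sigma> / (\<sigma>+\<mu>) = ((\<sigma>+\<mu>) / (\<sigma>+\<mu>)) * (\<sigma> / \<sigma>) * sep Ie"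
            by (simp add: c_def)
          also have "\<dots> = sep Ie" using ne by simp
          finally show ?thesis .
        qed
        moreover have "\<eta> * \<sigma> / (\<sigma>+\<mu>) \<le> c * sep Ie * \<sigma> / (\<sigma>+\<mu>)"
          using \<open>\<eta> \<le> c * sep Ie\<close> assms by (intro divide_right_mono mult_right_mono) auto
        ultimately show False by linarith
      qed
      have "dist (x t) (Se, Ee, Ie) = dist (fst (x t), fst (snd (x t)), snd (snd (x t))) (Se, Ee, Ie)" by simp
      also have "\<dots> \<le> \<bar>fst (x t) - Se\<bar> + \<bar>fst (snd (x t)) - Ee\<bar> + \<bar>snd (snd (x t)) - Ie\<bar>"
        by (rule s.dist3)
      also have "\<dots> < \<epsilon>" using d1 d2 d3 by (simp add: h_def)
      finally show "dist (x t) (Se, Ee, Ie) < \<epsilon>" .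
    qed
  next
    fix x assume H: "is_forward_solution f x \<and> x 0 \<in> interior (Omega N)"
    interpret s: sys "\<mu>*N" "\<beta>*(1-\<rho>)/N" "p/N+\<mu>" "\<sigma>+\<mu>" "\<gamma>+\<mu>" \<sigma> Se Ee Ie
         "\<lambda>t. fst (x t)" "\<lambda>t. fst (snd (x t))" "\<lambda>t. snd (snd (x t))"
      using key H by blast
    have "((\<lambda>t. (fst (x t), fst (snd (x t)), snd (snd (x t)))) \<longlongrightarrow> (Se, Ee, Ie)) at_top"
      by (intro tendsto_Pair s.S_lim s.E_lim s.I_lim)
    then show "(x \<longlongrightarrow> (Se, Ee, Ie)) at_top" by simp
  qed
  then show ?thesis unfolding Let_def Se_def Ie_def Ee_def f_def .
qed

end
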